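(* Let $n,k$ be positive integers and let $b_{\max} = \max\{b\in\mathbb{N}^* : WS^+_b(n+1) = WS^+(n+1)\}$. Then $$WS(n+k) \geq S(k)\,WS^+(n+1) + b_{\max}.$$
   Context: A set $A \subseteq \mathbb{N}$ is sum-free if for all $(a,b)\in A^2$ (allowing $a=b$), $a+b \notin A$; it is weakly sum-free if for all $(a,b)\in A^2$ with $a\neq b$, $a+b\notin A$. $S(n)$ (resp. $WS(n)$) is the largest $p$ such that $\{1,\dots,p\}$ can be partitioned into $n$ sum-free (resp. weakly sum-free) subsets. For positive integers $a>b$, let $\pi(x) = (x \bmod a) + a\cdot \mathbb{1}_{\{0,\dots,b\}}(x \bmod a)$. For positive integers $a,m,b$ with $a>b$, a partition $(A_1,\dots,A_m)$ of $\{1,\dots,a+b\}$ is a $b$-WS-template with width $a$ and $m$ colors if: (i) every $A_i$ is weakly sum-free; (ii) every $A_i\setminus\{1,\dots,b\}$ is sum-free; (iii) for all $(x,y)\in A_m^2$, $x+y>b+2a$ implies $x+y-2a\notin A_m$; (iv) for all $i\in\{1,\dots,m-1\}$ and $(x,y)\in A_i^2$, $x+y>a+b$ implies $\pi(x+y)\notin A_i$. $WS^+_b(m)$ is the largest $a$ such that a $b$-WS-template with width $a$ and $m$ colors exists ($0$ if none), and $WS^+(m)=\max_{b\in\mathbb{N}^*} WS^+_b(m)$. *)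

theory Defs
  imports Main
begin

definition sum_free :: "nat set \<Rightarrow> bool" where
  "sum_free A \<longleftrightarrow> (\<forall>x\<in>A. \<forall>y\<in>A. x + y \<notin> A)"

definition weakly_sum_free :: "nat set \<Rightarrow> bool" where
  "weakly_sum_free A \<longleftrightarrow> (\<forall>x\<in>A. \<forall>y\<in>A. x \<noteq> y \<longrightarrow> x + y \<notin> A)"

definition is_partition :: "nat \<Rightarrow> (nat \<Rightarrow> nat set) \<Rightarrow> nat set \<Rightarrow> bool" where
  "is_partition n A X \<longleftrightarrow>
     (\<Union>i\<in>{1..n}. A i) = X \<and>
     (\<forall>i\<in>{1..n}. \<forall>j\<in>{1..n}. i \<noteq> j \<longrightarrow> A i \<inter> A j = {})"

definition Schur :: "nat \<Rightarrow> nat" ("S") where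
  "S n = (GREATEST p. \<exists>A. is_partition n A {1..p} \<and> (\<forall>i\<in>{1..n}. sum_free (A i)))"

definition WS :: "nat \<Rightarrow> nat" where
  "WS n = (GREATEST p. \<exists>A. is_partition n A {1..p} \<and> (\<forall>i\<in>{1..n}. weakly_sum_free (A i)))"

definition pi_ab :: "nat \<Rightarrow> nat \<Rightarrow> nat \<Rightarrow> nat" where
  "pi_ab a b x = (x mod a) + (if x mod a \<le> b then a else 0)"

definition WS_template :: "nat \<Rightarrow> nat \<Rightarrow> nat \<Rightarrow> (nat \<Rightarrow> nat set) \<Rightarrow> bool" where
  "WS_template b a m A \<longleftrightarrow>
     0 < a \<and> 0 < b \<and> 0 < m \<and> b < a \<and>
     is_partition m A {1..a+b} \<and>
     (\<forall>i\<in>{1..m}. weakly_sum_free (A i)) \<and>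
     (\<forall>i\<in>{1..m}. sum_free (A i - {1..b})) \<and>
     (\<forall>x\<in>A m. \<forall>y\<in>A m. x + y > b + 2*a \<longrightarrow> x + y - 2*a \<notin> A m) \<and>
     (\<forall>i\<in>{1..m-1}. \<forall>x\<in>A i. \<forall>y\<in>A i. x + y > a + b \<longrightarrow> pi_ab a b (x + y) \<notin> A i)"

definition WS_plus_b :: "nat \<Rightarrow> nat \<Rightarrow> nat" where
  "WS_plus_b b m = (if \<exists>a A. WS_template b a m A
                    then (GREATEST a. \<exists>A. WS_template b a m A) else 0)"

definition WS_plus :: "nat \<Rightarrow> nat" where
  "WS_plus m = (GREATEST v. \<exists>b>0. v = WS_plus_b b m)"

end

theory Submission
  imports Defs "HOL-Library.Ramsey"
begin

lemma four_pick:
  fixes u v w x :: nat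
  assumes "u < v" "v < w" "w < x"
  shows "\<exists>p q r. p \<in> {u,v,w,x} \<and> q \<in> {u,v,w,x} \<and> r \<in> {u,v,w,x} \<and> p < q \<and> q < r \<and> q - p \<noteq> r - q"
proof (cases "v - u = w - v")
  case False
  hence "u \<in> {u,v,w,x} \<and> v \<in> {u,v,w,x} \<and> w \<in> {u,v,w,x} \<and> u < v \<and> v < w \<and> v - u \<noteq> w - v"
    using assms by simp
  thus ?thesis by blast
next
  case True
  show ?thesis
  proof (cases "w - u = x - w")
    case False
    hence "u \<in> {u,v,w,x} \<and> w \<in> {u,v,w,x} \<and> x \<in> {u,v,w,x} \<and> u < w \<and> w < x \<and> w - u \<noteq> x - w"
      using assms by simp
    thus ?thesis by blast
  next
    case True2: True
    have "w - v \<noteq> x - w" using True True2 assms by linarith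
    hence "v \<in> {u,v,w,x} \<and> w \<in> {u,v,w,x} \<and> x \<in> {u,v,w,x} \<and> v < w \<and> w < x \<and> w - v \<noteq> x - w"
      using assms by simp
    thus ?thesis by blast
  qed
qed

lemma ws_bound: "\<exists>N. \<forall>p A. is_partition n A {1..p} \<and> (\<forall>i\<in>{1..n}. weakly_sum_free (A i)) \<longrightarrow> p < N"
proof -
  obtain N :: nat where N: "partn_lst {..<N} (replicate n 4) 2" using ramsey_full[of "replicate n 4" 2] by blast
  show ?thesis
  proof (intro exI allI impI)
    fix p A assume H: "is_partition n A {1..p} \<and> (\<forall>i\<in>{1..n}. weakly_sum_free (A i))"
    show "p < N"
    proof (rule ccontr)
      assume "\<not> p < N"
      hence N': "partn_lst {..<Suc p} (replicate n 4) 2"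
        using partn_lst_greater_resource[OF N] by simp
      have cov: "\<And>d. d \<in> {1..p} \<Longrightarrow> \<exists>i\<in>{1..n}. d \<in> A i"
        using H unfolding is_partition_def by blast
      define col where "col d = (SOME i. i \<in> {1..n} \<and> d \<in> A i)" for d
      have col: "\<And>d. d \<in> {1..p} \<Longrightarrow> col d \<in> {1..n} \<and> d \<in> A (col d)"
        unfolding col_def by (rule someI_ex) (use cov in blast)
      define f where "f e = col (Max e - Min e) - 1" for e :: "nat set"
      have fe: "f {y, z} = col (z - y) - 1" if "y < z" for y z
        using that unfolding f_def by (simp add: max_def min_def)
      have "f \<in> nsets {..<Suc p} 2 \<rightarrow> {..<n}"
      proof
        fix e assume "e \<in> nsets {..<Suc p} 2"
        then obtain y z where e: "e = {y,z}" "y < z" "z < Suc p"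
          by (auto simp: ordered_nsets_2_eq)
        hence "z - y \<in> {1..p}" by auto
        thus "f e \<in> {..<n}" using col[of "z-y"] fe e by force
      qed
      then obtain i K where i: "i < n" and K: "K \<in> nsets {..<Suc p} (replicate n 4 ! i)"
        and mono: "f ` nsets K 2 \<subseteq> {i}"
        using partn_lstE[OF N'] by (metis length_replicate)
      have "K \<in> nsets {..<Suc p} 4" using K i by simp
      then obtain u v w x where K4: "K = {u,v,w,x}" "u < v" "v < w" "w < x" "x < Suc p"
        by (auto simp: ordered_nsets_4_eq)
      obtain y1 y2 y3 where Y: "y1 \<in> K" "y2 \<in> K" "y3 \<in> K" "y1 < y2" "y2 < y3" "y2 - y1 \<noteq> y3 - y2"
        using four_pick[OF K4(2-4)] K4(1) by blast
      have Kp: "\<And>y. y \<in> K \<Longrightarrow> y \<le> p" using K4 by auto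
      have cc: "col (z - y) = Suc i \<and> z - y \<in> {1..p}" if "y \<in> K" "z \<in> K" "y < z" for y z
      proof -
        have "{y,z} \<in> nsets K 2" using that by simp
        hence "f {y,z} = i" using mono by blast
        moreover have "z - y \<in> {1..p}" using that Kp[OF that(2)] by auto
        ultimately show ?thesis using fe[OF that(3)] col[of "z-y"] by auto
      qed
      have c1: "col (y2 - y1) = Suc i" "y2 - y1 \<in> {1..p}" using cc Y by auto
      have c2: "col (y3 - y2) = Suc i" "y3 - y2 \<in> {1..p}" using cc Y by auto
      have c3: "col (y3 - y1) = Suc i" "y3 - y1 \<in> {1..p}" using cc Y by (meson less_trans)+
      have "y2 - y1 \<in> A (Suc i)" "y3 - y2 \<in> A (Suc i)" "y3 - y1 \<in> A (Suc i)"
        using col c1 c2 c3 by metis+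
      moreover have "weakly_sum_free (A (Suc i))" using H i by auto
      moreover have "(y2 - y1) + (y3 - y2) = y3 - y1" using Y by auto
      ultimately show False using Y(6) unfolding weakly_sum_free_def by metis
    qed
  qed
qed


lemma pi_char:
  assumes "0 < a" "b < a" "b < x"
  shows "\<exists>j. x = pi_ab a b x + j*a \<and> b < pi_ab a b x \<and> pi_ab a b x \<le> a + b"
proof (cases "x mod a \<le> b")
  case True
  have "x div a > 0"
  proof (rule ccontr)
    assume "\<not> 0 < x div a" hence "x div a = 0" by simp
    hence "x mod a = x" by (metis add_0 div_mult_mod_eq mult_0)
    thus False using True assms by simp
  qed
  hence "x = (x mod a + a) + (x div a - 1) * a"
    by (metis Suc_diff_1 add.commute add.left_commute div_mult_mod_eq mult_Suc)
  thus ?thesis using True assms unfolding pi_ab_def by auto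
next
  case False
  have "x mod a < a" using assms by simp
  have e: "x = x mod a + (x div a) * a" by simp
  obtain j where j: "x = x mod a + j * a" using e by blast
  have pe: "pi_ab a b x = x mod a" using False unfolding pi_ab_def by simp
  have "x = pi_ab a b x + j*a \<and> b < pi_ab a b x \<and> pi_ab a b x \<le> a + b"
    unfolding pe using j False \<open>x mod a < a\<close> by (intro conjI) linarith+
  thus ?thesis by blast
qed

lemma uniq:
  fixes r1 r2 j1 j2 a b :: nat
  assumes "b < r1" "r1 \<le> a + b" "b < r2" "r2 \<le> a + b" "r1 + j1*a = r2 + j2*a"
  shows "r1 = r2 \<and> j1 = j2"
proof -
  have "j1 = j2"
  proof (rule ccontr)
    assume "j1 \<noteq> j2"
    hence "j1 + 1 \<le> j2 \<or> j2 + 1 \<le> j1" by linarith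
    thus False
    proof
      assume "j1 + 1 \<le> j2" hence "(j1+1)*a \<le> j2 * a" by (rule mult_right_mono) simp
      thus False using assms by (simp add: algebra_simps)
    next
      assume "j2 + 1 \<le> j1" hence "(j2+1)*a \<le> j1 * a" by (rule mult_right_mono) simp
      thus False using assms by (simp add: algebra_simps)
    qed
  qed
  thus ?thesis using assms by simp
qed


lemma construct:
  assumes T: "WS_template b a (n+1) A" and n: "0 < n"
    and Bp: "is_partition k B {1..s}" and Bs: "\<forall>t\<in>{1..k}. sum_free (B t)" and s: "0 < s"
  shows "\<exists>C. is_partition (n+k) C {1..s*a+b} \<and> (\<forall>i\<in>{1..n+k}. weakly_sum_free (C i))"
proof -
  have a0: "0 < a" and ba: "b < a" and Ap: "is_partition (n+1) A {1..a+b}"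
    and Aw: "\<forall>i\<in>{1..n+1}. weakly_sum_free (A i)"
    and As: "\<forall>i\<in>{1..n+1}. sum_free (A i - {1..b})"
    and A3: "\<forall>x\<in>A (n+1). \<forall>y\<in>A (n+1). x + y > b + 2*a \<longrightarrow> x + y - 2*a \<notin> A (n+1)"
    and A4: "\<forall>i\<in>{1..n}. \<forall>x\<in>A i. \<forall>y\<in>A i. x + y > a + b \<longrightarrow> pi_ab a b (x + y) \<notin> A i"
    using T unfolding WS_template_def by auto
  have Asub: "\<And>i x. i \<in> {1..n+1} \<Longrightarrow> x \<in> A i \<Longrightarrow> x \<in> {1..a+b}"
    using Ap unfolding is_partition_def by blast
  define rho where "rho x = (if x \<le> b then x else pi_ab a b x)" for x
  define J where "J x = (x - rho x) div a + 1" for x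
  have R2: "x = rho x + (J x - 1)*a \<and> (b < x \<longrightarrow> b < rho x \<and> rho x \<le> a + b)" for x
  proof (cases "x \<le> b")
    case True thus ?thesis unfolding J_def rho_def by simp
  next
    case False
    then obtain j where j: "x = pi_ab a b x + j*a" "b < pi_ab a b x" "pi_ab a b x \<le> a + b"
      using pi_char[OF a0 ba] by force
    have "x - pi_ab a b x = j*a" using j(1) by linarith
    hence "(x - pi_ab a b x) div a = j" using a0 by simp
    thus ?thesis using False j unfolding J_def rho_def by simp
  qed
  have R3: "x \<le> b \<Longrightarrow> rho x = x" for x unfolding rho_def by simp
  have R3': "rho x \<le> b \<Longrightarrow> x \<le> b" for x using R2[of x] by fastforce
  have R6: "rho z = r \<and> J z - 1 + i = j" if "b < r" "r \<le> a + b" "b < z" "r + j*a = z + i*a" for r z i j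
  proof -
    have "r + j*a = rho z + (J z - 1 + i)*a" using R2[of z] that by (simp add: algebra_simps)
    thus ?thesis using uniq[of b r a "rho z" j "J z - 1 + i"] R2[of z] that by auto
  qed
  have R5: "x \<le> a + b \<Longrightarrow> rho x = x" for x
    using R6[of x x 0 0] R3 by (cases "x \<le> b") auto
  have R1: "1 \<le> x \<Longrightarrow> rho x \<in> {1..a+b}" for x
    using R2[of x] R3[of x] ba by (cases "x \<le> b") auto
  have RJ: "1 \<le> x \<Longrightarrow> x \<le> s*a+b \<Longrightarrow> J x \<in> {1..s}" for x
  proof -
    assume x: "1 \<le> x" "x \<le> s*a+b"
    show "J x \<in> {1..s}"
    proof (cases "x \<le> b")
      case True thus ?thesis using s unfolding J_def rho_def by simp
    next
      case False
      hence "b < rho x" using R2 by auto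
      hence "(J x - 1)*a < s*a" using R2[of x] x by linarith
      hence "J x - 1 < s" using mult_less_cancel2 by blast
      thus ?thesis unfolding J_def by simp
    qed
  qed
  define C where "C i = (if i \<le> n then {x\<in>{1..s*a+b}. rho x \<in> A i}
                         else {x\<in>{1..s*a+b}. rho x \<in> A (n+1) \<and> J x \<in> B (i - n)})" for i
  have part: "is_partition (n+k) C {1..s*a+b}"
    unfolding is_partition_def
  proof (intro conjI ballI impI)
    show "(\<Union>i\<in>{1..n+k}. C i) = {1..s*a+b}"
    proof
      show "(\<Union>i\<in>{1..n+k}. C i) \<subseteq> {1..s*a+b}" unfolding C_def by auto
    next
      show "{1..s*a+b} \<subseteq> (\<Union>i\<in>{1..n+k}. C i)"
      proof
        fix x assume x: "x \<in> {1..s*a+b}"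
        have "rho x \<in> (\<Union>i\<in>{1..n+1}. A i)"
          using R1[of x] x Ap unfolding is_partition_def by auto
        then obtain i where i: "i \<in> {1..n+1}" "rho x \<in> A i" by blast
        show "x \<in> (\<Union>i\<in>{1..n+k}. C i)"
        proof (cases "i \<le> n")
          case True thus ?thesis using i x unfolding C_def by auto
        next
          case False
          hence "i = n+1" using i by auto
          moreover have "J x \<in> (\<Union>t\<in>{1..k}. B t)"
            using RJ[of x] x Bp unfolding is_partition_def by auto
          moreover then obtain t where t: "t \<in> {1..k}" "J x \<in> B t" by blast
          ultimately have "x \<in> C (n+t)" using i x unfolding C_def by auto
          thus ?thesis using t by auto
        qed
      qed
    qed
  next
    fix i j assume ij: "i \<in> {1..n+k}" "j \<in> {1..n+k}" "i \<noteq> j"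
    have dA: "\<And>i j. i \<in> {1..n+1} \<Longrightarrow> j \<in> {1..n+1} \<Longrightarrow> i \<noteq> j \<Longrightarrow> A i \<inter> A j = {}"
      using Ap unfolding is_partition_def by blast
    have dB: "\<And>i j. i \<in> {1..k} \<Longrightarrow> j \<in> {1..k} \<Longrightarrow> i \<noteq> j \<Longrightarrow> B i \<inter> B j = {}"
      using Bp unfolding is_partition_def by blast
    show "C i \<inter> C j = {}"
    proof (cases "i \<le> n")
      case True
      show ?thesis
      proof (cases "j \<le> n")
        case True2: True
        thus ?thesis using True ij dA[of i j] unfolding C_def by auto
      next
        case False
        thus ?thesis using True ij dA[of i "n+1"] unfolding C_def by auto
      qed
    next
      case False
      show ?thesis
      proof (cases "j \<le> n")
        case True2: True
        thus ?thesis using False ij dA[of j "n+1"] unfolding C_def by auto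
      next
        case False2: False
        have "B (i-n) \<inter> B (j-n) = {}" using False False2 ij by (intro dB) auto
        thus ?thesis using False False2 unfolding C_def by auto
      qed
    qed
  qed
  have wsf: "\<forall>i\<in>{1..n+k}. weakly_sum_free (C i)"
  proof
    fix i assume i: "i \<in> {1..n+k}"
    show "weakly_sum_free (C i)"
      unfolding weakly_sum_free_def
    proof (intro ballI impI notI)
      fix x y assume x: "x \<in> C i" and y: "y \<in> C i" and xy: "x \<noteq> y" and z: "x + y \<in> C i"
      define z where "z = x + y"
      have xr: "x \<in> {1..s*a+b}" "y \<in> {1..s*a+b}" "z \<in> {1..s*a+b}"
        using x y z unfolding C_def z_def by (auto split: if_splits)
      define c where "c = (if i \<le> n then i else n+1)"
      have c: "c \<in> {1..n+1}" using i unfolding c_def by auto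
      have rA: "rho x \<in> A c" "rho y \<in> A c" "rho z \<in> A c"
        using x y z unfolding C_def c_def z_def by (auto split: if_splits)
      have wA: "weakly_sum_free (A c)" using Aw c by blast
      have sA: "sum_free (A c - {1..b})" using As c by blast
      define q where "q = rho x + rho y"
      have zq: "z = q + (J x - 1 + (J y - 1))*a"
        using R2[of x] R2[of y] unfolding z_def q_def by (simp add: algebra_simps)
      have small: "rho z \<noteq> q" if "rho x \<noteq> b + 0 \<or> True" 
      proof
        assume eq: "rho z = q"
        show False
        proof (cases "rho x = rho y")
          case False thus False using wA rA eq unfolding weakly_sum_free_def q_def by metis
        next
          case True
          have "\<not> rho x \<le> b" using True R3' R3 xy by metis
          hence "rho x \<in> A c - {1..b}" "rho z \<in> A c - {1..b}" using rA eq True q_def by auto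
          thus False using sA True eq unfolding sum_free_def q_def by metis
        qed
      qed
      show False
      proof (cases "x \<le> b \<and> y \<le> b")
        case True
        hence "rho x = x" "rho y = y" "rho z = z" using R3 R5 ba unfolding z_def by auto
        thus False using small unfolding q_def z_def by simp
      next
        case False
        hence qb: "b < q" using R2[of x] R2[of y] unfolding q_def by auto
        have zb: "b < z" using False unfolding z_def by auto
        have q2: "q \<le> 2*a + 2*b" using R1[of x] R1[of y] xr unfolding q_def by auto
        show False
        proof (cases "q \<le> a + b")
          case True
          have eq: "q + (J x - 1 + (J y - 1))*a = z + 0*a" using zq by simp
          have "rho z = q" using R6[OF qb True zb eq] by simp
          thus False using small by simp
        next
          case qab: False
          show False
          proof (cases "i \<le> n")
            case True
            hence ci: "c = i" "i \<in> {1..n}" using i unfolding c_def by auto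
            obtain j where j: "q = pi_ab a b q + j*a" "b < pi_ab a b q" "pi_ab a b q \<le> a + b"
              using pi_char[OF a0 ba] qb by blast
            have d: "(j + (J x - 1 + (J y - 1)))*a = j*a + (J x - 1 + (J y - 1))*a"
              by (simp add: distrib_right)
            have eq: "pi_ab a b q + (j + (J x - 1 + (J y - 1)))*a = z + 0*a"
              using zq j(1) d by linarith
            have "rho z = pi_ab a b q" using R6[OF j(2) j(3) zb eq] by simp
            thus False using A4 ci rA qab unfolding q_def by auto
          next
            case False
            hence ci: "c = n + 1" "i - n \<in> {1..k}" using i unfolding c_def by auto
            have JB: "J x \<in> B (i-n)" "J y \<in> B (i-n)" "J z \<in> B (i-n)"
              using x y z False unfolding C_def z_def by auto
            show False
            proof (cases "q \<le> 2*a + b")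
              case True
              have d: "(J x - 1 + (J y - 1) + 1)*a = (J x - 1 + (J y - 1))*a + a"
                by (simp add: distrib_right)
              have eq: "(q - a) + (J x - 1 + (J y - 1) + 1)*a = z + 0*a"
                using zq d qab by linarith
              have r1: "b < q - a" "q - a \<le> a + b" using qab True by simp_all
              have "J z - 1 + 0 = J x - 1 + (J y - 1) + 1" using R6[OF r1 zb eq] by blast
              moreover have "1 \<le> J x" "1 \<le> J y" using RJ xr by auto
              ultimately have "J z = J x + J y" by linarith
              thus False using Bs ci JB unfolding sum_free_def by metis
            next
              case False
              have d: "(J x - 1 + (J y - 1) + 2)*a = (J x - 1 + (J y - 1))*a + 2*a"
                by (simp add: distrib_right)
              have eq: "(q - 2*a) + (J x - 1 + (J y - 1) + 2)*a = z + 0*a"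
                using zq d False by linarith
              have r1: "b < q - 2*a" "q - 2*a \<le> a + b" using q2 False ba by auto
              have "rho z = q - 2*a" using R6[OF r1 zb eq] by blast
              thus False using A3 ci rA False unfolding q_def by auto
            qed
          qed
        qed
      qed
    qed
  qed
  show ?thesis using part wsf by blast
qed

lemma sf_wsf: "sum_free A \<Longrightarrow> weakly_sum_free A"
  unfolding sum_free_def weakly_sum_free_def by blast

lemma template_ex:
  assumes "0 < n"
  shows "WS_template 1 2 (n+1) (\<lambda>i. if i = n+1 then {1,2} else if i = 1 then {3} else {})"
  using assms
  unfolding WS_template_def is_partition_def weakly_sum_free_def sum_free_def pi_ab_def
  by (auto split: if_splits)

theorem corollary3p18:
  fixes n k :: nat
  assumes "0 < n" and "0 < k"
  shows "WS (n + k) \<ge>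
           S k * WS_plus (n + 1) + (GREATEST b. 0 < b \<and> WS_plus_b b (n + 1) = WS_plus (n + 1))"
proof -
  define m where "m = n + 1"
  obtain Nm where Nm: "\<And>p A. is_partition m A {1..p} \<Longrightarrow> (\<forall>i\<in>{1..m}. weakly_sum_free (A i)) \<Longrightarrow> p < Nm"
    using ws_bound[of m] by blast
  have tb: "a < Nm \<and> b < a" if "WS_template b a m A" for a b A
  proof -
    have "is_partition m A {1..a+b}" "\<forall>i\<in>{1..m}. weakly_sum_free (A i)"
      using that unfolding WS_template_def by blast+
    hence "a + b < Nm" by (rule Nm)
    thus ?thesis using that unfolding WS_template_def by simp
  qed
  have tb': "a \<le> Nm" if "\<exists>A. WS_template b a m A" for a b
    using that tb by (meson less_imp_le)
  have wpb: "WS_plus_b b m \<le> Nm" for b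
  proof (cases "\<exists>a A. WS_template b a m A")
    case True
    then obtain a0 A0 where a0: "WS_template b a0 m A0" by blast
    have "\<exists>A. WS_template b (GREATEST a. \<exists>A. WS_template b a m A) m A"
      by (rule GreatestI_nat[where k = a0 and b = Nm]) (use a0 tb' in blast)+
    hence "(GREATEST a. \<exists>A. WS_template b a m A) \<le> Nm" by (rule tb')
    thus ?thesis using True unfolding WS_plus_b_def by simp
  next
    case False thus ?thesis unfolding WS_plus_b_def by (simp only: if_False)
  qed
  have T1: "WS_template 1 2 m (\<lambda>i. if i = n+1 then {1,2} else if i = 1 then {3} else {})"
    using template_ex[OF assms(1)] unfolding m_def .
  have w1: "2 \<le> WS_plus_b 1 m"
  proof -
    have "2 \<le> (GREATEST a. \<exists>A. WS_template 1 a m A)"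
      by (rule Greatest_le_nat[where b = Nm]) (use T1 tb' in blast)+
    thus ?thesis using T1 unfolding WS_plus_b_def by auto
  qed
  define W where "W = WS_plus m"
  have Wdef: "W = (GREATEST v. \<exists>b>0. v = WS_plus_b b m)" unfolding W_def WS_plus_def ..
  have wpb': "v \<le> Nm" if "\<exists>b>0. v = WS_plus_b b m" for v using that wpb by blast
  have P1: "\<exists>b>0. WS_plus_b 1 m = WS_plus_b b m" by blast
  have "\<exists>b>0. W = WS_plus_b b m"
    unfolding Wdef by (rule GreatestI_nat[where P="\<lambda>v. \<exists>b>0. v = WS_plus_b b m", OF P1 wpb'])
  then obtain b0 where b0: "0 < b0" "W = WS_plus_b b0 m" by blast
  have "WS_plus_b 1 m \<le> W"
    unfolding Wdef by (rule Greatest_le_nat[where P="\<lambda>v. \<exists>b>0. v = WS_plus_b b m", OF P1 wpb'])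
  hence W2: "2 \<le> W" using w1 by simp
  define bm where "bm = (GREATEST b. 0 < b \<and> WS_plus_b b m = W)"
  have bmb: "b \<le> Nm" if "0 < b \<and> WS_plus_b b m = W" for b
  proof -
    have "WS_plus_b b m \<noteq> 0" using that W2 by simp
    hence "\<exists>a A. WS_template b a m A" unfolding WS_plus_b_def by metis
    then obtain a A where "WS_template b a m A" by blast
    thus ?thesis using tb by (meson less_imp_le less_trans)
  qed
  have P2: "0 < b0 \<and> WS_plus_b b0 m = W" using b0 by simp
  have bmP: "0 < bm \<and> WS_plus_b bm m = W"
    unfolding bm_def by (rule GreatestI_nat[where P="\<lambda>b. 0 < b \<and> WS_plus_b b m = W", OF P2 bmb])
  have "WS_plus_b bm m \<noteq> 0" using bmP W2 by simp
  hence exT: "\<exists>a A. WS_template bm a m A" unfolding WS_plus_b_def by metis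
  hence Weq: "W = (GREATEST a. \<exists>A. WS_template bm a m A)" using bmP unfolding WS_plus_b_def by simp
  obtain a1 A1 where a1: "WS_template bm a1 m A1" using exT by blast
  have "\<exists>A. WS_template bm (GREATEST a. \<exists>A. WS_template bm a m A) m A"
    by (rule GreatestI_nat[where k = a1 and b = Nm]) (use a1 tb' in blast)+
  then obtain A where A: "WS_template bm W (n+1) A" unfolding m_def Weq by blast
  obtain Nk where Nk: "\<And>p B. is_partition k B {1..p} \<Longrightarrow> (\<forall>i\<in>{1..k}. weakly_sum_free (B i)) \<Longrightarrow> p < Nk"
    using ws_bound[of k] by blast
  define PS where "PS p = (\<exists>B. is_partition k B {1..p} \<and> (\<forall>i\<in>{1..k}. sum_free (B i)))" for p
  have Sdef: "S k = Greatest PS" unfolding Schur_def PS_def ..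
  have PSb: "p \<le> Nk" if PSp: "PS p" for p
  proof -
    obtain B where "is_partition k B {1..p}" "\<forall>i\<in>{1..k}. sum_free (B i)" using PSp unfolding PS_def by blast
    hence "p < Nk" using Nk sf_wsf by blast
    thus ?thesis by simp
  qed
  have PS1: "PS 1"
    unfolding PS_def
    by (rule exI[of _ "\<lambda>t. if t = 1 then {1} else {}"])
       (use assms(2) in \<open>auto simp: is_partition_def sum_free_def\<close>)
  have "PS (S k)" unfolding Sdef by (rule GreatestI_nat[where P=PS, OF PS1 PSb])
  then obtain B where B: "is_partition k B {1..S k}" "\<forall>i\<in>{1..k}. sum_free (B i)"
    unfolding PS_def by blast
  have S1: "1 \<le> S k" unfolding Sdef by (rule Greatest_le_nat[where P=PS, OF PS1 PSb])
  obtain C where C: "is_partition (n+k) C {1..S k * W + bm}" "\<forall>i\<in>{1..n+k}. weakly_sum_free (C i)"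
    using construct[OF A assms(1) B] S1 by auto
  obtain Nnk where Nnk: "\<And>p A. is_partition (n+k) A {1..p} \<Longrightarrow> (\<forall>i\<in>{1..n+k}. weakly_sum_free (A i)) \<Longrightarrow> p < Nnk"
    using ws_bound[of "n+k"] by blast
  have Pc: "\<exists>A. is_partition (n+k) A {1..S k * W + bm} \<and> (\<forall>i\<in>{1..n+k}. weakly_sum_free (A i))"
    using C by blast
  have Nb: "p \<le> Nnk" if "\<exists>A. is_partition (n+k) A {1..p} \<and> (\<forall>i\<in>{1..n+k}. weakly_sum_free (A i))" for p
    using that Nnk by (meson less_imp_le)
  have "S k * W + bm \<le> WS (n+k)"
    unfolding WS_def by (rule Greatest_le_nat[where P="\<lambda>p. \<exists>A. is_partition (n+k) A {1..p} \<and> (\<forall>i\<in>{1..n+k}. weakly_sum_free (A i))", OF Pc Nb])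
  thus ?thesis unfolding W_def bm_def m_def by simp
qed

end
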